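(* Let $m\ge2$ be an integer, let $B\subseteq m\mathbb Z$ be an infinite set, and let $F\subseteq\mathbb Z$ be a finite nonempty set all of whose elements are congruent to $\tilde f$ modulo $m$, where $\tilde f\in\{1,\dots,m-1\}$. Suppose there exist an integer $n\ge1$ and sets $S_1,\dots,S_n$ with $S_1\cup\cdots\cup S_n=m\mathbb N\cup B$ such that for each $i$ there is $W_i\subseteq\mathbb Z$ with $m\mathbb Z\setminus S_i=F+W_i$. If \[m\ge \tilde f+2\tilde f\left\lfloor\frac{n+1}{\tilde f}\right\rfloor+\operatorname{mod}_{\tilde f}(n+1),\] then $C=m\mathbb N\cup B\cup F$ arises as a minimal additive complement in $\mathbb Z$.
   Context: $\mathbb N=\{0,1,2,\dots\}$, $m\mathbb N=\{mk:k\in\mathbb N\}$; $\operatorname{mod}_{a}n$ denotes the remainder of $n$ upon division by $a$. For $C,W\subseteq\mathbb Z$, $C+W=\{c+w:c\in C,w\in W\}$. $C$ is a minimal additive complement (MAC) to $W$ if $C+W=\mathbb Z$ and no proper subset $C'\subsetneq C$ satisfies $C'+W=\mathbb Z$. $C$ arises as a MAC if there exists $W\subseteq\mathbb Z$ to which $C$ is a MAC. *)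

theory Defs
  imports Main
begin

definition sumset :: "int set \<Rightarrow> int set \<Rightarrow> int set" (infixl "\<oplus>\<^sub>s" 65) where
  "C \<oplus>\<^sub>s W = {c + w | c w. c \<in> C \<and> w \<in> W}"

definition is_MAC :: "int set \<Rightarrow> int set \<Rightarrow> bool" where
  "is_MAC C W \<longleftrightarrow> C \<oplus>\<^sub>s W = UNIV \<and> (\<forall>C'. C' \<subset> C \<longrightarrow> C' \<oplus>\<^sub>s W \<noteq> UNIV)"

definition arises_as_MAC :: "int set \<Rightarrow> bool" where
  "arises_as_MAC C \<longleftrightarrow> (\<exists>W. is_MAC C W)"

definition multN :: "int \<Rightarrow> int set" where
  "multN m = {m * int k | k. True}"

definition multZ :: "int \<Rightarrow> int set" where
  "multZ m = {m * k | k. True}"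

end

theory Submission
  imports Defs
begin

lemma divmod_char: fixes a q b :: int assumes "0 \<le> a" "a < b"
  shows "(a + q*b) div b = q" "(a + q*b) mod b = a"
  using assms by simp_all

definition pos :: "int \<Rightarrow> int \<Rightarrow> int" where
  "pos g k = 2*g*(k div g) + k mod g"
definition idx :: "int \<Rightarrow> int \<Rightarrow> int" where
  "idx g r = (r div (2*g))*g + r mod g"

lemma pos_div: assumes "g > 0" shows "pos g k div (2*g) = k div g" and "pos g k mod (2*g) = k mod g"
proof -
  have b: "k mod g < g" using assms by simp
  have a0: "0 \<le> k mod g" using assms by simp
  have a1: "k mod g < 2*g" using assms b by linarith
  note a = a0 a1
  have e: "pos g k = k mod g + (k div g) * (2*g)" unfolding pos_def by simp
  show "pos g k div (2*g) = k div g" unfolding e using a by simp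
  show "pos g k mod (2*g) = k mod g" unfolding e using a by simp
qed

lemma idx_pos: assumes "g > 0" shows "idx g (pos g k) = k"
proof -
  have e: "pos g k = k mod g + (k div g * 2) * g" unfolding pos_def by simp
  have "pos g k mod g = k mod g" unfolding e by simp
  then show ?thesis unfolding idx_def using pos_div[OF assms] by simp
qed

lemma idx_pos_g: assumes "g > 0" shows "idx g (pos g k + g) = k" and "(pos g k + g) mod (2*g) = k mod g + g"
proof -
  have b: "k mod g < g" "0 \<le> k mod g" using assms by simp_all
  have e: "pos g k + g = (k mod g + g) + (k div g) * (2*g)" unfolding pos_def by simp
  have d: "(pos g k + g) div (2*g) = k div g" unfolding e using b by simp
  show m: "(pos g k + g) mod (2*g) = k mod g + g" unfolding e using b by simp
  have e2: "pos g k + g = k mod g + (k div g * 2 + 1) * g" unfolding pos_def by (simp add: algebra_simps)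
  have "(pos g k + g) mod g = k mod g" unfolding e2 by simp
  then show "idx g (pos g k + g) = k" unfolding idx_def d by simp
qed

lemma mod2_low: fixes r g :: int assumes "g > 0" "r mod (2*g) < g" shows "r mod g = r mod (2*g)"
proof -
  have "r mod (2*g) mod g = r mod g" by (simp add: mod_mod_cancel)
  moreover have "r mod (2*g) mod g = r mod (2*g)" using assms by (simp add: mod_pos_pos_trivial)
  ultimately show ?thesis by simp
qed

lemma idx_minus_g: fixes r g :: int assumes "g > 0" "r \<ge> 0" "r mod (2*g) \<ge> g"
  shows "idx g (r - g) = idx g r" "(r - g) mod (2*g) < g" "r \<ge> g"
proof -
  have b: "r mod (2*g) < 2*g" using assms by simp
  have e: "r - g = (r mod (2*g) - g) + (r div (2*g)) * (2*g)" using mod_div_mult_eq[of r "2*g"] by linarith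
  have ha: "0 \<le> r mod (2*g) - g" using assms by simp
  have hb: "r mod (2*g) - g < 2*g" using b assms by linarith
  have d: "(r - g) div (2*g) = r div (2*g)" unfolding e using divmod_char[OF ha hb] by blast
  have "(r - g) mod (2*g) = r mod (2*g) - g" unfolding e using divmod_char[OF ha hb] by blast
  then show m: "(r - g) mod (2*g) < g" using b by simp
  have "(r - g) mod g = r mod g"
    by simp
  then show "idx g (r - g) = idx g r" unfolding idx_def d by simp
  have "r div (2*g) \<ge> 0" using assms by (simp add: pos_imp_zdiv_nonneg_iff)
  then have "(r div (2*g)) * (2*g) \<ge> 0" using assms by simp
  moreover have "r = r mod (2*g) + (r div (2*g)) * (2*g)" using mod_div_mult_eq[of r "2*g"] by linarith
  ultimately show "r \<ge> g" using assms by linarith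
qed

lemma idx_zero: fixes r g :: int assumes "g > 0" "r \<ge> 0" "idx g r = 0" "r mod (2*g) < g" shows "r = 0"
proof -
  have q: "r div (2*g) \<ge> 0" using assms by (simp add: pos_imp_zdiv_nonneg_iff)
  have "r mod g \<ge> 0" using assms by simp
  moreover have "(r div (2*g)) * g \<ge> 0" using q assms by simp
  ultimately have z: "r div (2*g) * g = 0" "r mod g = 0" using assms(3) unfolding idx_def by linarith+
  then have "r div (2*g) = 0" using assms by simp
  moreover have "r = r mod (2*g) + (r div (2*g)) * (2*g)" using mod_div_mult_eq[of r "2*g"] by linarith
  ultimately show "r = 0" using z mod2_low[OF assms(1) assms(4)] by simp
qed

lemma pos_suc: fixes g k :: int assumes "g > 0" shows "pos g (k+1) \<ge> pos g k + 1"
proof (cases "k mod g + 1 < g")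
  case True
  have e: "k + 1 = (k mod g + 1) + (k div g) * g" using mod_div_mult_eq[of k g] by linarith
  have h1: "0 \<le> k mod g + 1" using assms by simp
  have "(k+1) div g = k div g" "(k+1) mod g = k mod g + 1"
    unfolding e using divmod_char[OF h1 True] by blast+
  then show ?thesis unfolding pos_def by simp
next
  case False
  have "k mod g < g" using assms by simp
  then have kg: "k mod g + 1 = g" using False by linarith
  have d: "(k div g + 1) * g = k div g * g + g" by (simp add: algebra_simps)
  have e: "k + 1 = 0 + (k div g + 1) * g" using d kg mod_div_mult_eq[of k g] by linarith
  have h1: "(0::int) \<le> 0" by simp
  have "(k+1) div g = k div g + 1" "(k+1) mod g = 0"
    unfolding e using divmod_char[OF h1 assms] by blast+
  then show ?thesis unfolding pos_def using kg assms by (simp add: algebra_simps)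
qed

lemma pos_mono: assumes "g > 0" "i \<le> j" shows "pos g i \<le> pos g j"
  using assms(2)
proof (induction j rule: int_ge_induct)
  case base then show ?case by simp
next
  case (step j) then show ?case using pos_suc[OF assms(1), of j] by linarith
qed

lemma pos_strict: assumes "g > 0" "i < j" shows "pos g i < pos g j"
  using pos_mono[OF assms(1), of "i+1" j] pos_suc[OF assms(1), of i] assms by linarith

lemma pos_nonneg: assumes "g > 0" "k \<ge> 0" shows "pos g k \<ge> 0"
  using pos_mono[OF assms(1) assms(2)] by (simp add: pos_def)

lemma mem_sumset: "x \<in> A \<oplus>\<^sub>s B \<longleftrightarrow> (\<exists>a\<in>A. \<exists>b\<in>B. x = a + b)"
  by (auto simp: sumset_def)

lemma mem_multZ: "x \<in> multZ m \<longleftrightarrow> m dvd x"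
  by (auto simp: multZ_def dvd_def)

lemma mem_multN: assumes "m > 0" shows "x \<in> multN m \<longleftrightarrow> m dvd x \<and> x \<ge> 0"
proof
  assume "x \<in> multN m"
  then obtain k where "x = m * int k" by (auto simp: multN_def)
  then show "m dvd x \<and> x \<ge> 0" using assms by simp
next
  assume a: "m dvd x \<and> x \<ge> 0"
  then obtain k where k: "x = m * k" by (auto simp: dvd_def)
  then have "k \<ge> 0" using a assms by (simp add: zero_le_mult_iff)
  then have "x = m * int (nat k)" using k by simp
  then show "x \<in> multN m" unfolding multN_def by blast
qed

lemma MAC_crit:
  assumes cov: "\<And>z. \<exists>c\<in>C. \<exists>w\<in>W. z = c + w"
    and ess: "\<And>c. c \<in> C \<Longrightarrow> \<exists>w\<in>W. \<forall>c'\<in>C. c' \<noteq> c \<longrightarrow> c + w - c' \<notin> W"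
  shows "arises_as_MAC C"
  unfolding arises_as_MAC_def
proof (intro exI[of _ W])
  show "is_MAC C W" unfolding is_MAC_def
  proof (intro conjI allI impI)
    show "C \<oplus>\<^sub>s W = UNIV" using cov by (auto simp: mem_sumset)
  next
    fix C' assume "C' \<subset> C"
    then obtain c where c: "c \<in> C" "c \<notin> C'" by blast
    obtain w where w: "w \<in> W" "\<forall>c'\<in>C. c' \<noteq> c \<longrightarrow> c + w - c' \<notin> W" using ess[OF c(1)] by blast
    have "c + w \<notin> C' \<oplus>\<^sub>s W"
    proof
      assume "c + w \<in> C' \<oplus>\<^sub>s W"
      then obtain c' w' where h: "c' \<in> C'" "w' \<in> W" "c + w = c' + w'" by (auto simp: mem_sumset)
      have "c' \<in> C" "c' \<noteq> c" using h(1) c \<open>C' \<subset> C\<close> by auto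
      then have "c + w - c' \<notin> W" using w by blast
      moreover have "c + w - c' = w'" using h by simp
      ultimately show False using h by simp
    qed
    then show "C' \<oplus>\<^sub>s W \<noteq> UNIV" by auto
  qed
qed

lemma sep_lemma:
  fixes M A a b :: int
  assumes "M \<ge> 4*A + 1" "\<bar>M*a - M*b\<bar> \<le> 4*A"
  shows "a = b"
proof (rule ccontr)
  assume "a \<noteq> b"
  then have "\<bar>a - b\<bar> \<ge> 1" by simp
  have "M \<ge> 0" using assms by simp
  have "\<bar>M*a - M*b\<bar> = M * \<bar>a - b\<bar>" using \<open>M \<ge> 0\<close> by (simp add: right_diff_distrib[symmetric] abs_mult)
  also have "\<dots> \<ge> M * 1" using \<open>\<bar>a - b\<bar> \<ge> 1\<close> \<open>M \<ge> 0\<close> by (intro mult_left_mono) auto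
  finally show False using assms by simp
qed

lemma Y0_exists:
  fixes m g :: int and F :: "int set"
  assumes m: "m > 0" and F: "finite F" "F \<noteq> {}" and res: "\<forall>f\<in>F. f mod m = g mod m"
  shows "\<exists>Y. (\<forall>y\<in>Y. y mod m = (-g) mod m)
           \<and> (\<forall>x. m dvd x \<longrightarrow> (\<exists>f\<in>F. \<exists>y\<in>Y. x = f + y))
           \<and> (\<exists>L. \<forall>y. y mod m = (-g) mod m \<and> y \<le> L \<longrightarrow> y \<in> Y)
           \<and> (\<forall>f\<in>F. \<exists>y\<in>Y. \<forall>f'\<in>F. f' \<noteq> f \<longrightarrow> f + y - f' \<notin> Y)"
proof -
  define A where "A = Max (abs ` F)"
  have hA: "\<And>f. f \<in> F \<Longrightarrow> \<bar>f\<bar> \<le> A" unfolding A_def using F by auto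
  obtain f0 where "f0 \<in> F" using F by blast
  have A0: "A \<ge> 0" using hA[OF \<open>f0 \<in> F\<close>] by simp
  define M where "M = m * (4*A+1)"
  have M1: "M \<ge> 4*A + 1"
  proof -
    have "1 * (4*A+1) \<le> m * (4*A+1)" using m A0 by (intro mult_right_mono) auto
    then show ?thesis by (simp add: M_def)
  qed
  have M0: "M \<ge> 0" using M1 A0 by simp
  have Mdvd: "m dvd M" unfolding M_def by simp
  define D where "D = {M*h - k | h k. h \<in> F \<and> k \<in> F \<and> k \<noteq> h}"
  define Y where "Y = {y. y mod m = (-g) mod m \<and> y \<notin> D}"
  have resm: "\<And>x f. m dvd x \<Longrightarrow> f \<in> F \<Longrightarrow> (x - f) mod m = (-g) mod m"
  proof -
    fix x f assume "m dvd x" "f \<in> F"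
    then have "x mod m = 0" "f mod m = g mod m" using res by auto
    then have "(x - f) mod m = (0 - g mod m) mod m" by (metis mod_diff_eq)
    also have "\<dots> = (-g) mod m" by (simp add: mod_minus_eq)
    finally show "(x - f) mod m = (-g) mod m" .
  qed
  have cover: "\<forall>x. m dvd x \<longrightarrow> (\<exists>f\<in>F. \<exists>y\<in>Y. x = f + y)"
  proof (intro allI impI)
    fix x assume x: "m dvd x"
    show "\<exists>f\<in>F. \<exists>y\<in>Y. x = f + y"
    proof (rule ccontr)
      assume nt: "\<not> ?thesis"
      have allD: "x - f \<in> D" if f: "f \<in> F" for f
      proof (rule ccontr)
        assume "x - f \<notin> D"
        then have "x - f \<in> Y" unfolding Y_def using resm[OF x f] by simp
        moreover have "x = f + (x - f)" by simp
        ultimately show False using nt f by blast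
      qed
      define fM where "fM = Max F"
      define fm where "fm = Min F"
      have fMF: "fM \<in> F" and fmF: "fm \<in> F" unfolding fM_def fm_def using F by auto
      have fMx: "\<And>f. f \<in> F \<Longrightarrow> f \<le> fM" "\<And>f. f \<in> F \<Longrightarrow> fm \<le> f" unfolding fM_def fm_def using F by auto
      obtain h1 k1 where 1: "x - fM = M*h1 - k1" "h1 \<in> F" "k1 \<in> F" "k1 \<noteq> h1"
        using allD[OF fMF] unfolding D_def by blast
      obtain h2 k2 where 2: "x - fm = M*h2 - k2" "h2 \<in> F" "k2 \<in> F" "k2 \<noteq> h2"
        using allD[OF fmF] unfolding D_def by blast
      obtain h3 k3 where 3: "x - h1 = M*h3 - k3" "h3 \<in> F" "k3 \<in> F" "k3 \<noteq> h3"
        using allD[OF 1(2)] unfolding D_def by blast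
      have "\<bar>M*h2 - M*h1\<bar> \<le> 4*A"
        using 1 2 hA[OF 1(3)] hA[OF 2(3)] hA[OF fMF] hA[OF fmF] by linarith
      then have e2: "h2 = h1" using sep_lemma[OF M1] by blast
      have "\<bar>M*h3 - M*h1\<bar> \<le> 4*A"
        using 1 3 hA[OF 1(3)] hA[OF 3(3)] hA[OF fMF] hA[OF 1(2)] by linarith
      then have e3: "h3 = h1" using sep_lemma[OF M1] by blast
      have "k1 \<le> fM" "fm \<le> k2" using fMx 1 2 by auto
      moreover have "x - fm = M*h1 - k2" using 2(1) e2 by simp
      ultimately have "M*h1 - x = 0" using 1 by linarith
      moreover have "x - h1 = M*h1 - k3" using 3(1) e3 by simp
      ultimately have "k3 = h1" by linarith
      then show False using 3 e3 by simp
    qed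
  qed
  have lower: "\<exists>L. \<forall>y. y mod m = (-g) mod m \<and> y \<le> L \<longrightarrow> y \<in> Y"
  proof (intro exI allI impI)
    fix y assume y: "y mod m = (-g) mod m \<and> y \<le> - M*A - A - 1"
    have "y \<notin> D"
    proof
      assume "y \<in> D"
      then obtain h k where hk: "y = M*h - k" "h \<in> F" "k \<in> F" unfolding D_def by blast
      have "-A \<le> h" "k \<le> A" using hA[OF hk(2)] hA[OF hk(3)] by auto
      then have "M*(-A) \<le> M*h" using M0 by (intro mult_left_mono) auto
      then show False using hk y \<open>k \<le> A\<close> by simp
    qed
    then show "y \<in> Y" unfolding Y_def using y by simp
  qed
  have ess: "\<forall>f\<in>F. \<exists>y\<in>Y. \<forall>f'\<in>F. f' \<noteq> f \<longrightarrow> f + y - f' \<notin> Y"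
  proof
    fix f assume f: "f \<in> F"
    have r1: "(M*f - f) mod m = (-g) mod m"
    proof -
      obtain t where t: "M = m*t" using Mdvd by (auto simp: dvd_def)
      have "(M*f - f) mod m = (-f + (t*f)*m) mod m" using t by (simp add: algebra_simps)
      also have "\<dots> = (-f) mod m" by (rule mod_mult_self1)
      also have "\<dots> = (- (f mod m)) mod m" by (simp add: mod_minus_eq)
      also have "\<dots> = (- (g mod m)) mod m" using res f by simp
      also have "\<dots> = (-g) mod m" by (simp add: mod_minus_eq)
      finally show ?thesis .
    qed
    have r2: "M*f - f \<notin> D"
    proof
      assume "M*f - f \<in> D"
      then obtain h k where hk: "M*f - f = M*h - k" "h \<in> F" "k \<in> F" "k \<noteq> h" unfolding D_def by blast
      show False
      proof (cases "h = f")
        case True then show False using hk by simp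
      next
        case False
        have "\<bar>M*f - M*h\<bar> \<le> 4*A" using hk hA[OF f] hA[OF hk(3)] A0 by linarith
        then have "f = h" using sep_lemma[OF M1] by blast
        then show False using False by simp
      qed
    qed
    show "\<exists>y\<in>Y. \<forall>f'\<in>F. f' \<noteq> f \<longrightarrow> f + y - f' \<notin> Y"
    proof (intro bexI ballI impI)
      show "M*f - f \<in> Y" unfolding Y_def using r1 r2 by simp
    next
      fix f' assume "f' \<in> F" "f' \<noteq> f"
      then have "f + (M*f - f) - f' \<in> D" unfolding D_def using f by force
      then show "f + (M*f - f) - f' \<notin> Y" unfolding Y_def by simp
    qed
  qed
  have "\<forall>y\<in>Y. y mod m = (-g) mod m" unfolding Y_def by simp
  then show ?thesis using cover lower ess by blast
qed

definition Wset :: "int \<Rightarrow> int \<Rightarrow> int \<Rightarrow> int set \<Rightarrow> (int \<Rightarrow> int set) \<Rightarrow> int set" where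
  "Wset m g c Y V = {x. (let r = x mod m; i = idx g r in
     if c \<le> i then True
     else if r mod (2*g) < g then x - (r + g) \<in> (if i = c - 1 then Y else V i)
     else (i \<noteq> c - 1 \<and> x = r))}"

lemma W_full: "c \<le> idx g (x mod m) \<Longrightarrow> x \<in> Wset m g c Y V"
  by (simp add: Wset_def Let_def)

lemma W_wpos: "x mod m = r \<Longrightarrow> idx g r < c \<Longrightarrow> r mod (2*g) < g \<Longrightarrow>
   x \<in> Wset m g c Y V \<longleftrightarrow> x - (r + g) \<in> (if idx g r = c - 1 then Y else V (idx g r))"
  by (simp add: Wset_def Let_def)

lemma W_single: "x mod m = r \<Longrightarrow> idx g r < c \<Longrightarrow> \<not> r mod (2*g) < g \<Longrightarrow>
   x \<in> Wset m g c Y V \<longleftrightarrow> idx g r \<noteq> c - 1 \<and> x = r"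
  by (simp add: Wset_def Let_def)

lemma H0: fixes m x r :: int shows "m dvd x \<Longrightarrow> 0 \<le> r \<Longrightarrow> r < m \<Longrightarrow> (r + x) mod m = r"
  by (metis add.commute add.right_neutral dvd_imp_mod_0 mod_add_left_eq mod_pos_pos_trivial)

lemma H1: fixes m x r g :: int shows "x mod m = (-g) mod m \<Longrightarrow> 0 \<le> r \<Longrightarrow> r < m \<Longrightarrow> (r + g + x) mod m = r"
proof -
  assume a: "x mod m = (-g) mod m" "0 \<le> r" "r < m"
  have "(r + g + x) mod m = (r + g + x mod m) mod m" by (simp add: mod_add_right_eq)
  also have "\<dots> = (r + g + (-g) mod m) mod m" using a by simp
  also have "\<dots> = (r + g + (-g)) mod m" by (simp add: mod_add_right_eq)
  also have "\<dots> = r" using a by simp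
  finally show ?thesis .
qed

lemma Hres: fixes m a f g :: int shows "m dvd a \<Longrightarrow> f mod m = g mod m \<Longrightarrow> (a - f) mod m = (-g) mod m"
proof -
  assume "m dvd a" "f mod m = g mod m"
  then have "a mod m = 0" by simp
  then have "(a - f) mod m = (0 - g mod m) mod m" using \<open>f mod m = g mod m\<close> by (metis mod_diff_eq)
  also have "\<dots> = (-g) mod m" by (simp add: mod_minus_eq)
  finally show ?thesis .
qed

lemma Hdvd: fixes m y f g :: int shows "y mod m = (-g) mod m \<Longrightarrow> f mod m = g mod m \<Longrightarrow> m dvd (f + y)"
proof -
  assume a: "y mod m = (-g) mod m" "f mod m = g mod m"
  have "(f + y) mod m = (f mod m + y mod m) mod m" by (simp add: mod_add_eq)
  also have "\<dots> = (g mod m + (-g) mod m) mod m" using a by simp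
  also have "\<dots> = (g + (-g)) mod m" by (simp add: mod_add_eq)
  finally have "(f + y) mod m = 0" by simp
  then show ?thesis by (simp add: mod_eq_0_iff_dvd)
qed

lemma idx_nonneg: fixes g r :: int shows "g > 0 \<Longrightarrow> r \<ge> 0 \<Longrightarrow> idx g r \<ge> 0"
  unfolding idx_def by (simp add: pos_imp_zdiv_nonneg_iff)

lemma framework:
  fixes m g c :: int and C0 F :: "int set" and S V :: "int \<Rightarrow> int set"
  assumes g: "1 \<le> g" "g < m"
  and C0: "multN m \<subseteq> C0" "C0 \<subseteq> multZ m"
  and F: "finite F" "F \<noteq> {}" "\<forall>f\<in>F. f mod m = g"
  and c: "1 \<le> c" "pos g (c - 1) + g < m"
  and chains: "\<forall>i. 0 \<le> i \<and> i < c - 1 \<longrightarrow> S i \<subseteq> C0 \<and> multZ m - S i = F \<oplus>\<^sub>s V i"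
  and cover: "\<forall>x\<in>C0. \<exists>i. 0 \<le> i \<and> i < c - 1 \<and> x \<in> S i"
  and good: "\<forall>i. 0 \<le> i \<and> i < c - 1 \<longrightarrow>
      (\<forall>x. x mod m = (-g) mod m \<longrightarrow> (\<exists>a\<in>C0. \<exists>w\<in>V i. x = a + w)) \<or> (i = 0 \<and> c \<le> idx g (m - g))"
  shows "arises_as_MAC (C0 \<union> F)"
proof -
  have m0: "m > 0" and g0: "g > 0" using g by auto
  have gm: "g mod m = g" using g by simp
  have Fres: "\<And>f. f \<in> F \<Longrightarrow> f mod m = g mod m" using F(3) gm by simp
  have Fres': "\<forall>f\<in>F. f mod m = g mod m" using Fres by blast
  obtain Y where YY: "(\<forall>y\<in>Y. y mod m = (-g) mod m)
           \<and> (\<forall>x. m dvd x \<longrightarrow> (\<exists>f\<in>F. \<exists>y\<in>Y. x = f + y))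
           \<and> (\<exists>L. \<forall>y. y mod m = (-g) mod m \<and> y \<le> L \<longrightarrow> y \<in> Y)
           \<and> (\<forall>f\<in>F. \<exists>y\<in>Y. \<forall>f'\<in>F. f' \<noteq> f \<longrightarrow> f + y - f' \<notin> Y)"
    using Y0_exists[OF m0 F(1) F(2) Fres'] ..
  have Yres: "\<forall>y\<in>Y. y mod m = (-g) mod m" using YY by (rule conjunct1)
  have Ycov: "\<forall>x. m dvd x \<longrightarrow> (\<exists>f\<in>F. \<exists>y\<in>Y. x = f + y)" using YY[THEN conjunct2] by (rule conjunct1)
  have Ylow: "\<exists>L. \<forall>y. y mod m = (-g) mod m \<and> y \<le> L \<longrightarrow> y \<in> Y" using YY[THEN conjunct2, THEN conjunct2] by (rule conjunct1)
  have Yess: "\<forall>f\<in>F. \<exists>y\<in>Y. \<forall>f'\<in>F. f' \<noteq> f \<longrightarrow> f + y - f' \<notin> Y" using YY[THEN conjunct2, THEN conjunct2] by (rule conjunct2)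
  obtain L where L: "\<And>y. y mod m = (-g) mod m \<Longrightarrow> y \<le> L \<Longrightarrow> y \<in> Y" using Ylow by blast
  obtain f0 where f0: "f0 \<in> F" using F by blast
  have Vres: "w mod m = (-g) mod m" if i: "0 \<le> i" "i < c - 1" and w: "w \<in> V i" for i w
  proof -
    have "f0 + w \<in> F \<oplus>\<^sub>s V i" using f0 w by (auto simp: mem_sumset)
    then have "f0 + w \<in> multZ m" using chains i by blast
    then have "m dvd (f0 + w)" by (simp add: mem_multZ)
    then have "((f0 + w) - f0) mod m = (-g) mod m" using Hres Fres[OF f0] by blast
    then show ?thesis by simp
  qed
  have C0dvd: "\<And>a. a \<in> C0 \<Longrightarrow> m dvd a" using C0(2) by (auto simp: mem_multZ)
  have zeroC0: "0 \<in> C0" using C0(1) mem_multN[OF m0] by auto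
  define W where "W = Wset m g c Y V"
  have posc: "0 \<le> pos g i" "pos g i + g < m" if "0 \<le> i" "i \<le> c - 1" for i
    using pos_nonneg[OF g0 that(1)] pos_mono[OF g0 that(2)] c(2) by auto
  show ?thesis
  proof (rule MAC_crit[where W = W])
    fix z :: int
    define r where "r = z mod m"
    define i where "i = idx g r"
    have r0: "0 \<le> r" "r < m" unfolding r_def using m0 by auto
    have i0: "0 \<le> i" unfolding i_def using idx_nonneg[OF g0 r0(1)] .
    have zr: "m dvd (z - r)" unfolding r_def by (rule dvd_minus_mod)
    show "\<exists>a\<in>C0 \<union> F. \<exists>w\<in>W. z = a + w"
    proof (cases "c \<le> i")
      case True
      then have "z \<in> W" unfolding W_def i_def r_def by (rule W_full)
      then show ?thesis using zeroC0 by force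
    next
      case ic: False
      show ?thesis
      proof (cases "r mod (2*g) < g")
        case low: True
        show ?thesis
        proof (cases "i = c - 1")
          case True
          define t where "t = z - (r + g)"
          have tres: "t mod m = (-g) mod m"
          proof -
            have "t = (z - r) - g" unfolding t_def by simp
            then have "t mod m = ((z - r) - g) mod m" by simp
            also have "\<dots> = (-g) mod m" using Hres[OF zr, of g g] by simp
            finally show ?thesis .
          qed
          define N where "N = \<bar>t - L\<bar>"
          have N0: "N \<ge> 0" unfolding N_def by simp
          have "m * N \<ge> 1 * N" using m0 N0 by (intro mult_right_mono) auto
          moreover have "t - L \<le> N" unfolding N_def by simp
          ultimately have yL: "t - m*N \<le> L" by linarith
          have tm: "t - m*N = t + (-N)*m" by simp
          have "(t + (-N)*m) mod m = t mod m" by (rule mod_mult_self1)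
          then have yres: "(t - m*N) mod m = (-g) mod m" using tres tm by (simp add: mult.commute)
          have yY: "t - m*N \<in> Y" using L[OF yres yL] .
          define w where "w = r + g + (t - m*N)"
          have wm: "w mod m = r" unfolding w_def using H1[OF yres r0] .
          have "w \<in> W" unfolding W_def using W_wpos[OF wm] ic low True yY unfolding i_def w_def by simp
          moreover have "m*N \<in> C0" using C0(1) mem_multN[OF m0] N0 m0 by auto
          moreover have "z = m*N + w" unfolding w_def t_def by simp
          ultimately show ?thesis by blast
        next
          case nc: False
          then have ic1: "i < c - 1" using ic by simp
          have tres: "(z - (r + g)) mod m = (-g) mod m"
          proof -
            have "(z - (r + g)) mod m = ((z - r) - g) mod m" by (simp add: algebra_simps)
            also have "\<dots> = (-g) mod m" using Hres[OF zr, of g g] by simp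
            finally show ?thesis .
          qed
          from good i0 ic1 have "(\<forall>x. x mod m = (-g) mod m \<longrightarrow> (\<exists>a\<in>C0. \<exists>w\<in>V i. x = a + w)) \<or> (i = 0 \<and> c \<le> idx g (m - g))"
            by blast
          then show ?thesis
          proof
            assume gd: "\<forall>x. x mod m = (-g) mod m \<longrightarrow> (\<exists>a\<in>C0. \<exists>w\<in>V i. x = a + w)"
            then obtain a w' where aw: "a \<in> C0" "w' \<in> V i" "z - (r + g) = a + w'" using tres by blast
            have wm: "(r + g + w') mod m = r" using H1[OF Vres[OF i0 ic1 aw(2)] r0] .
            have "r + g + w' \<in> W" unfolding W_def using W_wpos[OF wm] ic low nc aw(2) unfolding i_def by simp
            moreover have "z = a + (r + g + w')" using aw by simp
            ultimately show ?thesis using aw by blast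
          next
            assume bd: "i = 0 \<and> c \<le> idx g (m - g)"
            then have "r = 0" using idx_zero[OF g0 r0(1)] low unfolding i_def by blast
            then have "m dvd z" using zr by simp
            have "(z - f0) mod m = (-g) mod m" using Hres[OF \<open>m dvd z\<close> Fres[OF f0]] .
            also have "\<dots> = m - g"
            proof -
              have "(-g) mod m = (-g + 1*m) mod m" by (rule mod_mult_self1[symmetric])
              moreover have "-g + 1*m = m - g" by simp
              moreover have "(m - g) mod m = m - g" using g by (intro mod_pos_pos_trivial) auto
              ultimately show ?thesis by simp
            qed
            finally have "c \<le> idx g ((z - f0) mod m)" using bd by simp
            then have "z - f0 \<in> W" unfolding W_def by (rule W_full)
            moreover have "z = f0 + (z - f0)" by simp
            ultimately show ?thesis using f0 by blast
          qed
        qed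
      next
        case high: False
        define p where "p = r - g"
        have pp: "idx g p = i" "p mod (2*g) < g" "r \<ge> g"
          using idx_minus_g[OF g0 r0(1)] high unfolding p_def i_def by auto
        have p0: "0 \<le> p" "p < m" using pp r0 g unfolding p_def by auto
        have rp: "r = p + g" unfolding p_def by simp
        show ?thesis
        proof (cases "i = c - 1")
          case True
          obtain f y where fy: "f \<in> F" "y \<in> Y" "z - r = f + y" using Ycov zr by blast
          have wm: "(r + y) mod m = p" using H1[OF bspec[OF Yres fy(2)] p0] rp by simp
          have "r + y \<in> W" unfolding W_def using W_wpos[OF wm] pp ic True fy(2) rp by simp
          moreover have "z = f + (r + y)" using fy by simp
          ultimately show ?thesis using fy by blast
        next
          case nc: False
          then have ic1: "i < c - 1" using ic by simp
          have ch: "S i \<subseteq> C0" "multZ m - S i = F \<oplus>\<^sub>s V i" using chains i0 ic1 by auto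
          show ?thesis
          proof (cases "z - r \<in> S i")
            case True
            have rm: "r mod m = r" using r0 by simp
            have "r \<in> W" unfolding W_def using W_single[OF rm] ic high nc unfolding i_def by simp
            moreover have "z = (z - r) + r" by simp
            ultimately show ?thesis using True ch by blast
          next
            case False
            then have "z - r \<in> F \<oplus>\<^sub>s V i" using ch zr by (auto simp: mem_multZ)
            then obtain f w where fw: "f \<in> F" "w \<in> V i" "z - r = f + w" by (auto simp: mem_sumset)
            have wm: "(r + w) mod m = p" using H1[OF Vres[OF i0 ic1 fw(2)] p0] rp by simp
            have "r + w \<in> W" unfolding W_def using W_wpos[OF wm] pp ic nc fw(2) rp by simp
            moreover have "z = f + (r + w)" using fw by simp
            ultimately show ?thesis using fw by blast
          qed
        qed
      qed
    qed
  next
    fix a assume a: "a \<in> C0 \<union> F"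
    show "\<exists>w\<in>W. \<forall>c'\<in>C0 \<union> F. c' \<noteq> a \<longrightarrow> a + w - c' \<notin> W"
    proof (cases "a \<in> C0")
      case True
      obtain i where i: "0 \<le> i" "i < c - 1" "a \<in> S i" using cover True by blast
      have ch: "S i \<subseteq> C0" "multZ m - S i = F \<oplus>\<^sub>s V i" using chains i by auto
      define p where "p = pos g i"
      define s where "s = p + g"
      have p0: "0 \<le> p" "p + g < m" unfolding p_def using posc[of i] i by auto
      have sm: "s mod m = s" unfolding s_def using p0 g by simp
      have si: "idx g s = i" "\<not> s mod (2*g) < g" unfolding s_def p_def using idx_pos_g[OF g0, of i] pos_mod_sign[OF g0, of i] by auto
      have pi: "idx g p = i" "p mod (2*g) < g" unfolding p_def using idx_pos[OF g0, of i] pos_div[OF g0, of i] g0 by auto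
      have ic: "i < c" "i \<noteq> c - 1" using i by auto
      show ?thesis
      proof (intro bexI ballI impI)
        show "s \<in> W" unfolding W_def using W_single[OF sm] si ic by simp
      next
        fix c' assume c': "c' \<in> C0 \<union> F" "c' \<noteq> a"
        show "a + s - c' \<notin> W"
        proof (cases "c' \<in> C0")
          case True
          have "m dvd (a - c')" using C0dvd[OF \<open>a \<in> C0\<close>] C0dvd[OF True] by simp
          then have xm: "(a + s - c') mod m = s"
            using H0[of m "a - c'" s] p0 g unfolding s_def by (simp add: algebra_simps)
          show ?thesis
          proof
            assume "a + s - c' \<in> W"
            then have "a + s - c' = s" unfolding W_def using W_single[OF xm] si ic by simp
            then show False using c' by simp
          qed
        next
          case False
          then have cF: "c' \<in> F" using c' by simp
          have dres: "(a - c') mod m = (-g) mod m" using Hres[OF C0dvd[OF \<open>a \<in> C0\<close>] Fres[OF cF]] .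
          have xm: "(a + s - c') mod m = p"
            using H1[OF dres p0(1)] p0 g unfolding s_def by (simp add: algebra_simps)
          show ?thesis
          proof
            assume "a + s - c' \<in> W"
            then have "a + s - c' - (p + g) \<in> V i" unfolding W_def using W_wpos[OF xm] pi ic by simp
            then have "a - c' \<in> V i" unfolding s_def by simp
            moreover have "a = c' + (a - c')" by simp
            ultimately have "a \<in> F \<oplus>\<^sub>s V i" using cF unfolding mem_sumset by blast
            then have "a \<notin> S i" using ch by auto
            then show False using i by simp
          qed
        qed
      qed
    next
      case False
      then have aF: "a \<in> F" using a by simp
      obtain y where y: "y \<in> Y" "\<forall>f'\<in>F. f' \<noteq> a \<longrightarrow> a + y - f' \<notin> Y" using Yess aF by blast
      have yres: "y mod m = (-g) mod m" using Yres y(1) by blast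
      define p where "p = pos g (c - 1)"
      define e where "e = p + g"
      have p0: "0 \<le> p" "p + g < m" unfolding p_def using posc[of "c - 1"] c by auto
      have em: "e mod m = e" unfolding e_def using p0 g by simp
      have ei: "idx g e = c - 1" "\<not> e mod (2*g) < g" unfolding e_def p_def using idx_pos_g[OF g0, of "c - 1"] pos_mod_sign[OF g0, of "c - 1"] by auto
      have pi: "idx g p = c - 1" "p mod (2*g) < g" unfolding p_def using idx_pos[OF g0, of "c - 1"] pos_div[OF g0, of "c - 1"] g0 by auto
      have wm: "(e + y) mod m = p" unfolding e_def using H1[OF yres p0(1)] p0 g by simp
      show ?thesis
      proof (intro bexI ballI impI)
        show "e + y \<in> W" unfolding W_def using W_wpos[OF wm] pi y(1) e_def by simp
      next
        fix c' assume c': "c' \<in> C0 \<union> F" "c' \<noteq> a"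
        have ay: "m dvd (a + y)" using Hdvd[OF yres Fres[OF aF]] .
        show "a + (e + y) - c' \<notin> W"
        proof (cases "c' \<in> C0")
          case True
          have "m dvd (a + y - c')" using ay C0dvd[OF True] by simp
          then have xm: "(a + (e + y) - c') mod m = e"
            using H0[of m "a + y - c'" e] p0 g unfolding e_def by (simp add: algebra_simps)
          show ?thesis using W_single[OF xm] ei unfolding W_def by simp
        next
          case False
          then have cF: "c' \<in> F" using c' by simp
          have dres: "(a + y - c') mod m = (-g) mod m" using Hres[OF ay Fres[OF cF]] .
          have xm: "(a + (e + y) - c') mod m = p"
            using H1[OF dres p0(1)] p0 g unfolding e_def by (simp add: algebra_simps)
          show ?thesis
          proof
            assume "a + (e + y) - c' \<in> W"
            then have "a + (e + y) - c' - (p + g) \<in> Y" unfolding W_def using W_wpos[OF xm] pi by simp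
            then have "a + y - c' \<in> Y" unfolding e_def by (simp add: algebra_simps)
            then show False using y(2) cF c'(2) by blast
          qed
        qed
      qed
    qed
  qed
qed

definition goodV :: "int \<Rightarrow> int \<Rightarrow> int set \<Rightarrow> int set \<Rightarrow> bool" where
  "goodV m g C0 V \<longleftrightarrow> (\<forall>x. x mod m = (-g) mod m \<longrightarrow> (\<exists>a\<in>C0. \<exists>w\<in>V. x = a + w))"

lemma res_down: fixes m g s :: int assumes "m > 0" shows "\<exists>w. w \<le> s \<and> w mod m = (-g) mod m"
proof -
  define w where "w = s - (s + g) mod m"
  have "m dvd (s + g) - (s + g) mod m" by (rule dvd_minus_mod)
  then have d: "m dvd (w + g)" unfolding w_def by (simp add: algebra_simps)
  have "((w + g) - g) mod m = (-g) mod m" using Hres[OF d, of g g] by simp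
  moreover have "w \<le> s" unfolding w_def using assms by simp
  ultimately show ?thesis by auto
qed

lemma res_up: fixes m g s :: int assumes "m > 0" shows "\<exists>w. w \<ge> s \<and> w mod m = (-g) mod m"
proof -
  obtain w where w: "w \<le> -s" "w mod m = (-(-g)) mod m" using res_down[OF assms, of "-s" "-g"] by blast
  have "(-w) mod m = (- (w mod m)) mod m" by (simp add: mod_minus_eq)
  also have "\<dots> = (-g) mod m" using w(2) by (simp add: mod_minus_eq)
  finally show ?thesis using w(1) by (intro exI[of _ "-w"]) simp
qed

lemma good_down:
  fixes m g :: int
  assumes m: "m > 0" and C0: "multN m \<subseteq> C0"
    and unb: "\<And>t. \<exists>w\<in>V. w \<le> t \<and> w mod m = (-g) mod m"
  shows "goodV m g C0 V"
  unfolding goodV_def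
proof (intro allI impI)
  fix x assume x: "x mod m = (-g) mod m"
  obtain w where w: "w \<in> V" "w \<le> x" "w mod m = (-g) mod m" using unb[of x] by blast
  have "(x - w) mod m = 0" using x w(3) by (simp add: mod_diff_eq[symmetric])
  then have "m dvd (x - w)" by (simp add: mod_eq_0_iff_dvd)
  then have "x - w \<in> multN m" using mem_multN[OF m] w(2) by simp
  then show "\<exists>a\<in>C0. \<exists>w\<in>V. x = a + w" using C0 w(1) by (intro bexI[of _ "x - w"] bexI[of _ w]) auto
qed

lemma good_up:
  fixes m g a0 :: int
  assumes m: "m > 0" and C0: "\<And>x. m dvd x \<Longrightarrow> x \<le> a0 \<Longrightarrow> x \<in> C0"
    and unb: "\<And>t. \<exists>w\<in>V. w \<ge> t \<and> w mod m = (-g) mod m"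
  shows "goodV m g C0 V"
  unfolding goodV_def
proof (intro allI impI)
  fix x assume x: "x mod m = (-g) mod m"
  obtain w where w: "w \<in> V" "w \<ge> x - a0" "w mod m = (-g) mod m" using unb[of "x - a0"] by blast
  have "(x - w) mod m = 0" using x w(3) by (simp add: mod_diff_eq[symmetric])
  then have "m dvd (x - w)" by (simp add: mod_eq_0_iff_dvd)
  then have "x - w \<in> C0" using C0 w(2) by simp
  then show "\<exists>a\<in>C0. \<exists>w\<in>V. x = a + w" using w(1) by (intro bexI[of _ "x - w"] bexI[of _ w]) auto
qed

lemma trunc_up:
  fixes m g a :: int
  assumes m: "m > 0" and F: "finite F" "F \<noteq> {}" "\<forall>f\<in>F. f mod m = g mod m"
    and SW: "multZ m - S = F \<oplus>\<^sub>s W"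
  shows "multZ m - {x\<in>S. x > a} = F \<oplus>\<^sub>s (W \<union> {w. w mod m = (-g) mod m \<and> w + Max F \<le> a})"
proof (intro equalityI subsetI)
  fix x assume x: "x \<in> multZ m - {x\<in>S. x > a}"
  show "x \<in> F \<oplus>\<^sub>s (W \<union> {w. w mod m = (-g) mod m \<and> w + Max F \<le> a})"
  proof (cases "x \<in> S")
    case False
    then have "x \<in> F \<oplus>\<^sub>s W" using SW x by blast
    then show ?thesis by (auto simp: mem_sumset)
  next
    case True
    then have xa: "x \<le> a" using x by auto
    have MF: "Max F \<in> F" using F by simp
    have "m dvd x" using x by (simp add: mem_multZ)
    then have "(x - Max F) mod m = (-g) mod m" using Hres F(3) MF by blast
    moreover have "x = Max F + (x - Max F)" by simp
    ultimately show ?thesis using MF xa unfolding mem_sumset by force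
  qed
next
  fix x assume x: "x \<in> F \<oplus>\<^sub>s (W \<union> {w. w mod m = (-g) mod m \<and> w + Max F \<le> a})"
  then obtain f w where fw: "f \<in> F" "w \<in> W \<union> {w. w mod m = (-g) mod m \<and> w + Max F \<le> a}" "x = f + w"
    by (auto simp: mem_sumset)
  show "x \<in> multZ m - {x\<in>S. x > a}"
  proof (cases "w \<in> W")
    case True
    then have "x \<in> F \<oplus>\<^sub>s W" using fw by (auto simp: mem_sumset)
    then show ?thesis using SW by blast
  next
    case False
    then have w: "w mod m = (-g) mod m" "w + Max F \<le> a" using fw by auto
    have "f \<le> Max F" using fw F by simp
    then have "x \<le> a" using w fw by simp
    moreover have "m dvd x" using Hdvd[OF w(1)] F(3) fw by simp
    ultimately show ?thesis by (simp add: mem_multZ)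
  qed
qed

lemma trunc_low:
  fixes m g a :: int
  assumes m: "m > 0" and F: "finite F" "F \<noteq> {}" "\<forall>f\<in>F. f mod m = g mod m"
    and SW: "multZ m - S = F \<oplus>\<^sub>s W"
  shows "multZ m - {x\<in>S. x \<le> a} = F \<oplus>\<^sub>s (W \<union> {w. w mod m = (-g) mod m \<and> w + Min F > a})"
proof (intro equalityI subsetI)
  fix x assume x: "x \<in> multZ m - {x\<in>S. x \<le> a}"
  show "x \<in> F \<oplus>\<^sub>s (W \<union> {w. w mod m = (-g) mod m \<and> w + Min F > a})"
  proof (cases "x \<in> S")
    case False
    then have "x \<in> F \<oplus>\<^sub>s W" using SW x by blast
    then show ?thesis by (auto simp: mem_sumset)
  next
    case True
    then have xa: "x > a" using x by auto
    have MF: "Min F \<in> F" using F by simp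
    have "m dvd x" using x by (simp add: mem_multZ)
    then have "(x - Min F) mod m = (-g) mod m" using Hres F(3) MF by blast
    moreover have "x = Min F + (x - Min F)" by simp
    ultimately show ?thesis using MF xa unfolding mem_sumset by force
  qed
next
  fix x assume x: "x \<in> F \<oplus>\<^sub>s (W \<union> {w. w mod m = (-g) mod m \<and> w + Min F > a})"
  then obtain f w where fw: "f \<in> F" "w \<in> W \<union> {w. w mod m = (-g) mod m \<and> w + Min F > a}" "x = f + w"
    by (auto simp: mem_sumset)
  show "x \<in> multZ m - {x\<in>S. x \<le> a}"
  proof (cases "w \<in> W")
    case True
    then have "x \<in> F \<oplus>\<^sub>s W" using fw by (auto simp: mem_sumset)
    then show ?thesis using SW by blast
  next
    case False
    then have w: "w mod m = (-g) mod m" "w + Min F > a" using fw by auto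
    have "Min F \<le> f" using fw F by simp
    then have "x > a" using w fw by simp
    moreover have "m dvd x" using Hdvd[OF w(1)] F(3) fw by simp
    ultimately show ?thesis by (simp add: mem_multZ)
  qed
qed

lemma chain_up:
  fixes m g a :: int
  assumes m: "m > 0" and F: "finite F" "F \<noteq> {}" "\<forall>f\<in>F. f mod m = g mod m"
    and C0: "multN m \<subseteq> C0" and S: "S \<subseteq> C0" and SW: "multZ m - S = F \<oplus>\<^sub>s W"
  shows "{x\<in>S. x > a} \<subseteq> C0 \<and> multZ m - {x\<in>S. x > a} = F \<oplus>\<^sub>s (W \<union> {w. w mod m = (-g) mod m \<and> w + Max F \<le> a})
     \<and> goodV m g C0 (W \<union> {w. w mod m = (-g) mod m \<and> w + Max F \<le> a})"
proof (intro conjI)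
  show "{x\<in>S. x > a} \<subseteq> C0" using S by auto
  show "multZ m - {x\<in>S. x > a} = F \<oplus>\<^sub>s (W \<union> {w. w mod m = (-g) mod m \<and> w + Max F \<le> a})"
    by (rule trunc_up[OF m F SW])
  show "goodV m g C0 (W \<union> {w. w mod m = (-g) mod m \<and> w + Max F \<le> a})"
  proof (rule good_down[OF m C0])
    fix t
    obtain w where "w \<le> min t (a - Max F)" "w mod m = (-g) mod m" using res_down[OF m] by blast
    then show "\<exists>w\<in>W \<union> {w. w mod m = (-g) mod m \<and> w + Max F \<le> a}. w \<le> t \<and> w mod m = (-g) mod m"
      by (intro bexI[of _ w]) auto
  qed
qed

lemma chain_low:
  fixes m g a :: int
  assumes m: "m > 0" and F: "finite F" "F \<noteq> {}" "\<forall>f\<in>F. f mod m = g mod m"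
    and C0: "\<And>x. m dvd x \<Longrightarrow> x \<le> a \<Longrightarrow> x \<in> C0" and S: "S \<subseteq> C0" and SW: "multZ m - S = F \<oplus>\<^sub>s W"
  shows "{x\<in>S. x \<le> a} \<subseteq> C0 \<and> multZ m - {x\<in>S. x \<le> a} = F \<oplus>\<^sub>s (W \<union> {w. w mod m = (-g) mod m \<and> w + Min F > a})
     \<and> goodV m g C0 (W \<union> {w. w mod m = (-g) mod m \<and> w + Min F > a})"
proof (intro conjI)
  show "{x\<in>S. x \<le> a} \<subseteq> C0" using S by auto
  show "multZ m - {x\<in>S. x \<le> a} = F \<oplus>\<^sub>s (W \<union> {w. w mod m = (-g) mod m \<and> w + Min F > a})"
    by (rule trunc_low[OF m F SW])
  show "goodV m g C0 (W \<union> {w. w mod m = (-g) mod m \<and> w + Min F > a})"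
  proof (rule good_up[OF m C0])
    fix t
    obtain w where "w \<ge> max t (a - Min F + 1)" "w mod m = (-g) mod m" using res_up[OF m] by blast
    then show "\<exists>w\<in>W \<union> {w. w mod m = (-g) mod m \<and> w + Min F > a}. w \<ge> t \<and> w mod m = (-g) mod m"
      by (intro bexI[of _ w]) auto
  qed
qed

lemma caseB_good:
  fixes m g :: int
  assumes m: "m > 0" and F: "finite F" "F \<noteq> {}" "\<forall>f\<in>F. f mod m = g mod m"
    and C0: "multN m \<subseteq> C0" and SW: "multZ m - S = F \<oplus>\<^sub>s W"
    and nb: "\<And>t. \<exists>x. m dvd x \<and> x \<le> t \<and> x \<notin> S"
  shows "goodV m g C0 W"
proof (rule good_down[OF m C0])
  fix t
  obtain x where x: "m dvd x" "x \<le> t + Min F" "x \<notin> S" using nb by blast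
  then have "x \<in> F \<oplus>\<^sub>s W" using SW by (auto simp: mem_multZ)
  then obtain f w where fw: "f \<in> F" "w \<in> W" "x = f + w" by (auto simp: mem_sumset)
  have "Min F \<le> f" using F fw by simp
  then have "w \<le> t" using x fw by simp
  moreover have "(x - f) mod m = (-g) mod m" using Hres[OF x(1)] F(3) fw(1) by blast
  ultimately show "\<exists>w\<in>W. w \<le> t \<and> w mod m = (-g) mod m" using fw by (intro bexI[of _ w]) auto
qed

lemma bound_pos: fixes g :: int and n :: nat
  shows "g + 2 * g * ((int n + 1) div g) + (int n + 1) mod g = pos g (int n + 1) + g"
  unfolding pos_def by simp

theorem theorem8:
  fixes m ft :: int and B F :: "int set" and n :: nat and S :: "nat \<Rightarrow> int set"
  assumes "m \<ge> 2"
    and "B \<subseteq> multZ m" and "infinite B"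
    and "finite F" and "F \<noteq> {}"
    and "1 \<le> ft" and "ft \<le> m - 1"
    and "\<forall>x\<in>F. x mod m = ft"
    and "n \<ge> 1"
    and "(\<Union>i\<in>{1..n}. S i) = multN m \<union> B"
    and "\<forall>i\<in>{1..n}. \<exists>W. multZ m - S i = F \<oplus>\<^sub>s W"
    and "m \<ge> ft + 2 * ft * ((int n + 1) div ft) + (int n + 1) mod ft"
  shows "arises_as_MAC (multN m \<union> B \<union> F)"
proof -
  define g where "g = ft"
  define C0 where "C0 = multN m \<union> B"
  have m0: "m > 0" using assms(1) by simp
  have g: "1 \<le> g" "g < m" using assms(6,7) unfolding g_def by auto
  have g0: "g > 0" using g by simp
  have F: "finite F" "F \<noteq> {}" "\<forall>f\<in>F. f mod m = g" using assms(4,5,8) unfolding g_def by auto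
  have gm: "g mod m = g" using g by simp
  have Fres: "\<forall>f\<in>F. f mod m = g mod m" using F(3) gm by simp
  have C0a: "multN m \<subseteq> C0" unfolding C0_def by simp
  have NZ: "multN m \<subseteq> multZ m" unfolding multN_def multZ_def by blast
  have C0b: "C0 \<subseteq> multZ m" unfolding C0_def using NZ assms(2) by blast
  have C0dvd: "\<And>x. x \<in> C0 \<Longrightarrow> m dvd x" using C0b by (auto simp: mem_multZ)
  obtain Wc where Wc: "\<forall>i\<in>{1..n}. multZ m - S i = F \<oplus>\<^sub>s Wc i" using assms(11) by metis
  have SC0: "\<And>i. i \<in> {1..n} \<Longrightarrow> S i \<subseteq> C0" using assms(10) unfolding C0_def by blast
  have Scov: "\<And>x. x \<in> C0 \<Longrightarrow> \<exists>j\<in>{1..n}. x \<in> S j" using assms(10) unfolding C0_def by blast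
  have bnd: "pos g (int n + 1) + g \<le> m" using assms(12) bound_pos[of g n] unfolding g_def by simp
  have pn: "pos g (int n) < pos g (int n + 1)" using pos_strict[OF g0] by simp
  have goal: "arises_as_MAC (C0 \<union> F)"
  proof (cases "\<exists>i0\<in>{1..n}. \<exists>a. \<forall>x. m dvd x \<and> x \<le> a \<longrightarrow> x \<in> S i0")
    case False
    define S' where "S' = (\<lambda>i::int. S (nat i + 1))"
    define V' where "V' = (\<lambda>i::int. Wc (nat i + 1))"
    show ?thesis
    proof (rule framework[OF g C0a C0b F, of "int n + 1" S' V'])
      show "1 \<le> int n + 1" by simp
      show "pos g (int n + 1 - 1) + g < m" using pn bnd by simp
      show "\<forall>i. 0 \<le> i \<and> i < int n + 1 - 1 \<longrightarrow> S' i \<subseteq> C0 \<and> multZ m - S' i = F \<oplus>\<^sub>s V' i"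
      proof (intro allI impI)
        fix i :: int assume i: "0 \<le> i \<and> i < int n + 1 - 1"
        then have "nat i + 1 \<in> {1..n}" by auto
        then show "S' i \<subseteq> C0 \<and> multZ m - S' i = F \<oplus>\<^sub>s V' i" unfolding S'_def V'_def using SC0 Wc by blast
      qed
      show "\<forall>x\<in>C0. \<exists>i. 0 \<le> i \<and> i < int n + 1 - 1 \<and> x \<in> S' i"
      proof
        fix x assume "x \<in> C0"
        then obtain j where j: "j \<in> {1..n}" "x \<in> S j" using Scov by blast
        then have "nat (int j - 1) + 1 = j" by auto
        then show "\<exists>i. 0 \<le> i \<and> i < int n + 1 - 1 \<and> x \<in> S' i" unfolding S'_def using j
          by (intro exI[of _ "int j - 1"]) auto
      qed
      show "\<forall>i. 0 \<le> i \<and> i < int n + 1 - 1 \<longrightarrow>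
        (\<forall>x. x mod m = (-g) mod m \<longrightarrow> (\<exists>a\<in>C0. \<exists>w\<in>V' i. x = a + w)) \<or> (i = 0 \<and> int n + 1 \<le> idx g (m - g))"
      proof (intro allI impI)
        fix i :: int assume i: "0 \<le> i \<and> i < int n + 1 - 1"
        then have j: "nat i + 1 \<in> {1..n}" by auto
        have nb: "\<exists>x. m dvd x \<and> x \<le> t \<and> x \<notin> S (nat i + 1)" for t
          using False j by blast
        have sw: "multZ m - S (nat i + 1) = F \<oplus>\<^sub>s Wc (nat i + 1)" using Wc j by blast
        have "goodV m g C0 (Wc (nat i + 1))"
          using caseB_good[OF m0 F(1,2) Fres C0a sw] nb by blast
        then show "(\<forall>x. x mod m = (-g) mod m \<longrightarrow> (\<exists>a\<in>C0. \<exists>w\<in>V' i. x = a + w)) \<or> (i = 0 \<and> int n + 1 \<le> idx g (m - g))"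
          unfolding goodV_def V'_def by blast
      qed
    qed
  next
    case True
    then obtain i0 a where i0: "i0 \<in> {1..n}" and low: "\<And>x. m dvd x \<Longrightarrow> x \<le> a \<Longrightarrow> x \<in> S i0" by blast
    have lowC0: "\<And>x. m dvd x \<Longrightarrow> x \<le> a \<Longrightarrow> x \<in> C0" using low SC0[OF i0] by blast
    define Rdn where "Rdn = {w. w mod m = (-g) mod m \<and> w + Max F \<le> a}"
    define Rup where "Rup = {w. w mod m = (-g) mod m \<and> w + Min F > a}"
    have cup: "\<And>j. j \<in> {1..n} \<Longrightarrow> {x\<in>S j. x > a} \<subseteq> C0 \<and> multZ m - {x\<in>S j. x > a} = F \<oplus>\<^sub>s (Wc j \<union> Rdn)
       \<and> goodV m g C0 (Wc j \<union> Rdn)"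
    proof -
      fix j assume j: "j \<in> {1..n}"
      have sw: "multZ m - S j = F \<oplus>\<^sub>s Wc j" using Wc j by blast
      show "?thesis j" unfolding Rdn_def by (rule chain_up[OF m0 F(1,2) Fres C0a SC0[OF j] sw])
    qed
    have clow: "{x\<in>S i0. x \<le> a} \<subseteq> C0 \<and> multZ m - {x\<in>S i0. x \<le> a} = F \<oplus>\<^sub>s (Wc i0 \<union> Rup)
       \<and> goodV m g C0 (Wc i0 \<union> Rup)"
    proof -
      have sw: "multZ m - S i0 = F \<oplus>\<^sub>s Wc i0" using Wc i0 by blast
      show ?thesis unfolding Rup_def by (rule chain_low[OF m0 F(1,2) Fres lowC0 SC0[OF i0] sw])
    qed
    show ?thesis
    proof (cases "m = pos g (int n + 1) + g")
      case True
      define tau where "tau = (\<lambda>i::int. if i < int i0 then nat i else nat i + 1)"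
      define S' where "S' = (\<lambda>i::int. if i = 0 then S i0 else {x\<in>S (tau i). x > a})"
      define V' where "V' = (\<lambda>i::int. if i = 0 then Wc i0 else Wc (tau i) \<union> Rdn)"
      have taui: "tau i \<in> {1..n}" if "1 \<le> i" "i < int n" for i
        using that i0 unfolding tau_def by auto
      show ?thesis
      proof (rule framework[OF g C0a C0b F, of "int n + 1" S' V'])
        show "1 \<le> int n + 1" by simp
        show "pos g (int n + 1 - 1) + g < m" using pn True by simp
        show "\<forall>i. 0 \<le> i \<and> i < int n + 1 - 1 \<longrightarrow> S' i \<subseteq> C0 \<and> multZ m - S' i = F \<oplus>\<^sub>s V' i"
        proof (intro allI impI)
          fix i :: int assume i: "0 \<le> i \<and> i < int n + 1 - 1"
          show "S' i \<subseteq> C0 \<and> multZ m - S' i = F \<oplus>\<^sub>s V' i"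
          proof (cases "i = 0")
            case True then show ?thesis unfolding S'_def V'_def using SC0[OF i0] Wc i0 by simp
          next
            case False
            then have "tau i \<in> {1..n}" using taui i by simp
            then show ?thesis unfolding S'_def V'_def using cup False by simp
          qed
        qed
        show "\<forall>x\<in>C0. \<exists>i. 0 \<le> i \<and> i < int n + 1 - 1 \<and> x \<in> S' i"
        proof
          fix x assume x: "x \<in> C0"
          then obtain j where j: "j \<in> {1..n}" "x \<in> S j" using Scov by blast
          show "\<exists>i. 0 \<le> i \<and> i < int n + 1 - 1 \<and> x \<in> S' i"
          proof (cases "x \<le> a \<or> j = i0")
            case True
            then have "x \<in> S i0" using low C0dvd[OF x] j by auto
            then show ?thesis unfolding S'_def using assms(9) by (intro exI[of _ 0]) simp
          next
            case False
            define i where "i = (if j < i0 then int j else int j - 1)"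
            have i1: "1 \<le> i" "i < int n" "i \<noteq> 0" using False j i0 unfolding i_def by auto
            have "tau i = j" using False j i0 unfolding i_def tau_def by auto
            then have "x \<in> S' i" unfolding S'_def using i1 j False by simp
            then show ?thesis using i1 by (intro exI[of _ i]) simp
          qed
        qed
        show "\<forall>i. 0 \<le> i \<and> i < int n + 1 - 1 \<longrightarrow>
          (\<forall>x. x mod m = (-g) mod m \<longrightarrow> (\<exists>a\<in>C0. \<exists>w\<in>V' i. x = a + w)) \<or> (i = 0 \<and> int n + 1 \<le> idx g (m - g))"
        proof (intro allI impI)
          fix i :: int assume i: "0 \<le> i \<and> i < int n + 1 - 1"
          show "(\<forall>x. x mod m = (-g) mod m \<longrightarrow> (\<exists>a\<in>C0. \<exists>w\<in>V' i. x = a + w)) \<or> (i = 0 \<and> int n + 1 \<le> idx g (m - g))"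
          proof (cases "i = 0")
            case True
            have "idx g (m - g) = int n + 1" using \<open>m = pos g (int n + 1) + g\<close> idx_pos[OF g0] by simp
            then show ?thesis using True by simp
          next
            case False
            then have "tau i \<in> {1..n}" using taui i by simp
            then have "goodV m g C0 (V' i)" unfolding V'_def using cup False by simp
            then show ?thesis unfolding goodV_def by blast
          qed
        qed
      qed
    next
      case False
      then have mgt: "pos g (int n + 1) + g < m" using bnd by simp
      define S' where "S' = (\<lambda>i::int. if i = int n then {x\<in>S i0. x \<le> a} else {x\<in>S (nat i + 1). x > a})"
      define V' where "V' = (\<lambda>i::int. if i = int n then Wc i0 \<union> Rup else Wc (nat i + 1) \<union> Rdn)"
      have all: "S' i \<subseteq> C0 \<and> multZ m - S' i = F \<oplus>\<^sub>s V' i \<and> goodV m g C0 (V' i)"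
        if i: "0 \<le> i" "i < int n + 2 - 1" for i
      proof (cases "i = int n")
        case True then show ?thesis unfolding S'_def V'_def using clow by simp
      next
        case False
        then have "nat i + 1 \<in> {1..n}" using i by auto
        then show ?thesis unfolding S'_def V'_def using cup False by simp
      qed
      show ?thesis
      proof (rule framework[OF g C0a C0b F, of "int n + 2" S' V'])
        show "1 \<le> int n + 2" by simp
        show "pos g (int n + 2 - 1) + g < m" using mgt by (simp add: add.commute)
        show "\<forall>i. 0 \<le> i \<and> i < int n + 2 - 1 \<longrightarrow> S' i \<subseteq> C0 \<and> multZ m - S' i = F \<oplus>\<^sub>s V' i"
          using all by blast
        show "\<forall>x\<in>C0. \<exists>i. 0 \<le> i \<and> i < int n + 2 - 1 \<and> x \<in> S' i"
        proof
          fix x assume x: "x \<in> C0"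
          then obtain j where j: "j \<in> {1..n}" "x \<in> S j" using Scov by blast
          show "\<exists>i. 0 \<le> i \<and> i < int n + 2 - 1 \<and> x \<in> S' i"
          proof (cases "x \<le> a")
            case True
            then have "x \<in> S i0" using low C0dvd[OF x] by auto
            then show ?thesis unfolding S'_def using True by (intro exI[of _ "int n"]) simp
          next
            case False
            have "nat (int j - 1) + 1 = j" "int j - 1 \<noteq> int n" using j by auto
            then show ?thesis unfolding S'_def using j False by (intro exI[of _ "int j - 1"]) auto
          qed
        qed
        show "\<forall>i. 0 \<le> i \<and> i < int n + 2 - 1 \<longrightarrow>
          (\<forall>x. x mod m = (-g) mod m \<longrightarrow> (\<exists>a\<in>C0. \<exists>w\<in>V' i. x = a + w)) \<or> (i = 0 \<and> int n + 2 \<le> idx g (m - g))"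
          using all unfolding goodV_def by blast
      qed
    qed
  qed
  then show ?thesis unfolding C0_def by (simp add: Un_assoc)
qed

end
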